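(* Let $C_1,\dots,C_m\subseteq\mathbb{R}^L$ be closed convex sets (the convex feasibility problem $T$), let $\mathrm{Prox}_T:\mathbb{R}^L\to[0,\infty)$ be a proximity function, let $\mathcal{A}:\mathbb{R}^L\to\mathbb{R}^L$ be an algorithmic operator, and let $\phi:\mathbb{R}^L\to\mathbb{R}$ be a target function. Assume that the basic algorithm defined by $\mathcal{A}$ is strongly perturbation resilient and that there is $\varepsilon>0$ such that for every $x^0\in\mathbb{R}^L$ the $\varepsilon$-output of the sequence $x^{k+1}=\mathcal{A}(x^k)$ exists. Let $\{\eta_\ell\}_{\ell=0}^\infty$ be a summable sequence of positive real numbers, let $\{N_k\}_{k=0}^\infty$ be a sequence of positive integers bounded by some positive integer $N$, and let $\bar y\in\mathbb{R}^L$. Let $\{y^k\}_{k=0}^\infty$ be any sequence produced by the following procedure (Algorithm 1): set $y^0=\bar y$ and a counter $\ell=0$; for each $k\ge 0$, set $y^{k,0}=y^k$, and for $n=0,1,\dots,N_k-1$ choose any $v^{k,n}\in\mathcal{B}_{\eta_\ell,\phi}(y^{k,n})$, set $y^{k,n+1}=y^{k,n}+v^{k,n}$ and increase $\ell$ by $1$; then set $y^{k+1}=\mathcal{A}(y^{k,N_k})$. Then for every $\varepsilon'>\varepsilon$, the $\varepsilon'$-output of the sequence $\{y^k\}_{k=0}^\infty$ with respect to $(T,\mathrm{Prox}_T)$ exists.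
   Context: Given $\varepsilon>0$ and a sequence $\{x^k\}_{k=0}^\infty\subseteq\mathbb{R}^L$, an element $x^K$ is the $\varepsilon$-output of the sequence (with respect to $(T,\mathrm{Prox}_T)$) if $\mathrm{Prox}_T(x^K)\le\varepsilon$ and $\mathrm{Prox}_T(x^k)>\varepsilon$ for all $0\le k<K$. The basic algorithm $x^{k+1}=\mathcal{A}(x^k)$ is strongly perturbation resilient if (i) there exists $\varepsilon>0$ such that the $\varepsilon$-output of $\{x^k\}$ exists for every $x^0\in\mathbb{R}^L$; and (ii) for every $\varepsilon>0$ for which the $\varepsilon$-output of $\{x^k\}$ exists for every $x^0$, the $\varepsilon'$-output also exists for every $\varepsilon'>\varepsilon$ and every sequence $\{y^k\}$ generated by $y^{k+1}=\mathcal{A}(y^k+\beta_k v^k)$, where $\{v^k\}\subseteq\mathbb{R}^L$ is bounded and $\beta_k\ge0$ with $\sum_k\beta_k<\infty$. For $\delta>0$ and $y\in\mathbb{R}^L$, the nonascending $\delta$-ball is $\mathcal{B}_{\delta,\phi}(y):=\{d\in\mathbb{R}^L:\|d\|\le\delta,\ \phi(y+d)\le\phi(y)\}$ ($\|\cdot\|$ the Euclidean norm). *)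

theory Defs
  imports "HOL-Analysis.Analysis"
begin

definition is_eps_output :: "('a \<Rightarrow> real) \<Rightarrow> real \<Rightarrow> (nat \<Rightarrow> 'a) \<Rightarrow> nat \<Rightarrow> bool" where
  "is_eps_output Prox eps x K \<longleftrightarrow> Prox (x K) \<le> eps \<and> (\<forall>k<K. Prox (x k) > eps)"

definition eps_output_exists :: "('a \<Rightarrow> real) \<Rightarrow> real \<Rightarrow> (nat \<Rightarrow> 'a) \<Rightarrow> bool" where
  "eps_output_exists Prox eps x \<longleftrightarrow> (\<exists>K. is_eps_output Prox eps x K)"

definition strongly_perturbation_resilient ::
  "('a::real_normed_vector \<Rightarrow> real) \<Rightarrow> ('a \<Rightarrow> 'a) \<Rightarrow> bool" where
  "strongly_perturbation_resilient Prox A \<longleftrightarrow>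
     (\<exists>eps>0. \<forall>x0. eps_output_exists Prox eps (\<lambda>k. (A ^^ k) x0)) \<and>
     (\<forall>eps>0. (\<forall>x0. eps_output_exists Prox eps (\<lambda>k. (A ^^ k) x0)) \<longrightarrow>
        (\<forall>eps'>eps. \<forall>(y::nat \<Rightarrow> 'a) (v::nat \<Rightarrow> 'a) (\<beta>::nat \<Rightarrow> real).
            bounded (range v) \<and> (\<forall>k. \<beta> k \<ge> 0) \<and> summable \<beta> \<and>
            (\<forall>k. y (Suc k) = A (y k + \<beta> k *\<^sub>R v k))
            \<longrightarrow> eps_output_exists Prox eps' y))"

definition nonasc_ball :: "real \<Rightarrow> ('a::real_normed_vector \<Rightarrow> real) \<Rightarrow> 'a \<Rightarrow> 'a set" where
  "nonasc_ball \<delta> \<phi> y = {d. norm d \<le> \<delta> \<and> \<phi> (y + d) \<le> \<phi> y}"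

text \<open>Algorithm 1: y k are the outer iterates, yy k n the inner iterates y^{k,n},
  v k n the perturbations v^{k,n}; the counter value at inner step (k,n) is
  (sum of N j for j<k) + n.\<close>
definition algorithm1 ::
  "('a::real_normed_vector \<Rightarrow> 'a) \<Rightarrow> ('a \<Rightarrow> real) \<Rightarrow> (nat \<Rightarrow> real) \<Rightarrow> (nat \<Rightarrow> nat) \<Rightarrow> 'a
   \<Rightarrow> (nat \<Rightarrow> 'a) \<Rightarrow> (nat \<Rightarrow> nat \<Rightarrow> 'a) \<Rightarrow> (nat \<Rightarrow> nat \<Rightarrow> 'a) \<Rightarrow> bool" where
  "algorithm1 A \<phi> \<eta> N ybar y yy v \<longleftrightarrow>
     y 0 = ybar \<and>
     (\<forall>k. yy k 0 = y k) \<and>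
     (\<forall>k. \<forall>n<N k. v k n \<in> nonasc_ball (\<eta> ((\<Sum>j<k. N j) + n)) \<phi> (yy k n)
                  \<and> yy k (Suc n) = yy k n + v k n) \<and>
     (\<forall>k. y (Suc k) = A (yy k (N k)))"

end

theory Submission
  imports Defs
begin

lemma block_sum:
  fixes \<eta> :: "nat \<Rightarrow> real"
  shows "(\<Sum>i<a + b. \<eta> i) = (\<Sum>i<a. \<eta> i) + (\<Sum>n<b. \<eta> (a + n))"
  by (induction b) auto

theorem lemma1:
  fixes C :: "nat \<Rightarrow> 'a::euclidean_space set" and m :: nat
    and Prox :: "'a \<Rightarrow> real" and A :: "'a \<Rightarrow> 'a" and \<phi> :: "'a \<Rightarrow> real"
    and eps :: real and \<eta> :: "nat \<Rightarrow> real" and N :: "nat \<Rightarrow> nat" and Nmax :: nat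
    and ybar :: 'a and y :: "nat \<Rightarrow> 'a" and yy v :: "nat \<Rightarrow> nat \<Rightarrow> 'a"
  assumes "\<forall>i<m. closed (C i) \<and> convex (C i)"
    and "\<forall>x. Prox x \<ge> 0"
    and "strongly_perturbation_resilient Prox A"
    and "eps > 0"
    and "\<forall>x0. eps_output_exists Prox eps (\<lambda>k. (A ^^ k) x0)"
    and "\<forall>l. \<eta> l > 0" and "summable \<eta>"
    and "Nmax > 0" and "\<forall>k. 0 < N k \<and> N k \<le> Nmax"
    and "algorithm1 A \<phi> \<eta> N ybar y yy v"
  shows "\<forall>eps'>eps. eps_output_exists Prox eps' y"
proof -
  define S where "S k = (\<Sum>j<k. N j)" for k
  define \<beta> where "\<beta> k = (\<Sum>n<N k. \<eta> (S k + n))" for k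
  define w where "w k = (1 / \<beta> k) *\<^sub>R (yy k (N k) - y k)" for k
  have alg: "\<forall>k. yy k 0 = y k"
    "\<forall>k. \<forall>n<N k. v k n \<in> nonasc_ball (\<eta> (S k + n)) \<phi> (yy k n) \<and> yy k (Suc n) = yy k n + v k n"
    "\<forall>k. y (Suc k) = A (yy k (N k))"
    using assms(10) unfolding algorithm1_def S_def by auto
  have diff: "n \<le> N k \<Longrightarrow> yy k n - y k = (\<Sum>i<n. v k i)" for k n
    by (induction n) (use alg in auto)
  have vb: "n < N k \<Longrightarrow> norm (v k n) \<le> \<eta> (S k + n)" for k n
    using alg(2) by (auto simp: nonasc_ball_def)
  have nd: "norm (yy k (N k) - y k) \<le> \<beta> k" for k
  proof -
    have "norm (yy k (N k) - y k) = norm (\<Sum>i<N k. v k i)" using diff by simp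
    also have "\<dots> \<le> (\<Sum>i<N k. norm (v k i))" by (rule norm_sum)
    also have "\<dots> \<le> \<beta> k" unfolding \<beta>_def by (rule sum_mono) (use vb in auto)
    finally show ?thesis .
  qed
  have bpos: "\<beta> k > 0" for k
    unfolding \<beta>_def using assms(6,9) by (intro sum_pos) auto
  have wb: "norm (w k) \<le> 1" for k
    using nd[of k] bpos[of k] by (simp add: w_def divide_le_eq_1)
  have bd: "bounded (range w)"
    unfolding bounded_iff using wb by blast
  have ysucc: "y (Suc k) = A (y k + \<beta> k *\<^sub>R w k)" for k
    using alg(3) bpos[of k] by (simp add: w_def)
  have psum: "(\<Sum>k<K. \<beta> k) = (\<Sum>i<S K. \<eta> i)" for K
    by (induction K) (simp_all add: S_def \<beta>_def block_sum)
  have sb: "summable \<beta>"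
  proof (rule summableI_nonneg_bounded[where x="suminf \<eta>"])
    show "0 \<le> \<beta> n" for n using bpos[of n] by simp
    show "(\<Sum>i<n. \<beta> i) \<le> suminf \<eta>" for n
      unfolding psum using assms(6,7)
      by (intro sum_le_suminf) (auto intro: less_imp_le)
  qed
  have "\<forall>eps>0. (\<forall>x0. eps_output_exists Prox eps (\<lambda>k. (A ^^ k) x0)) \<longrightarrow>
        (\<forall>eps'>eps. \<forall>(y::nat \<Rightarrow> 'a) (v::nat \<Rightarrow> 'a) (\<beta>::nat \<Rightarrow> real).
            bounded (range v) \<and> (\<forall>k. \<beta> k \<ge> 0) \<and> summable \<beta> \<and>
            (\<forall>k. y (Suc k) = A (y k + \<beta> k *\<^sub>R v k))
            \<longrightarrow> eps_output_exists Prox eps' y)"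
    using assms(3) unfolding strongly_perturbation_resilient_def by blast
  then show ?thesis
    using assms(4,5) bd sb ysucc bpos by (meson less_imp_le)
qed

end
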